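(* Let $V(\tilde{\Lambda})$ be a finite-dimensional irreducible $gl(m|n+1)$-module with highest weight $\tilde\Lambda$, equipped with its non-degenerate invariant sesquilinear form $\langle\,,\,\rangle$ (described in the context). Let $V_0(\tilde\Lambda)$ be its maximal $\mathbb{Z}$-graded component and put $W(\tilde{\Lambda}) = U(K_-)V_0(\tilde{\Lambda})$. If $0 \neq v_+ \in V(\tilde{\Lambda})$ is an $L$-maximal weight vector, then $\langle v_+, W(\tilde{\Lambda})\rangle \neq (0)$.
   Context: Work over $\mathbb{C}$. Let $N=m+n+1$ and set the parity $(p)=0$ for $1\le p\le m$ and $(p)=1$ for $m<p\le N$. The Lie superalgebra $\hat L=gl(m|n+1)$ has homogeneous basis $E_{pq}$ ($1\le p,q\le N$) of parity $(p)+(q)$ with graded bracket $[E_{pq},E_{rs}]=\delta_{qr}E_{ps}-(-1)^{((p)+(q))((r)+(s))}\delta_{ps}E_{rq}$. It has the $\mathbb{Z}$-grading $\hat L=\hat L_-\oplus\hat L_0\oplus\hat L_+$ with $\hat L_0=gl(m)\oplus gl(n+1)$ (the even part), $\hat L_+=\mathrm{span}\{E_{pq}: p\le m<q\}$, $\hat L_-=\mathrm{span}\{E_{qp}: p\le m<q\}$. Let $L=gl(m|n)\oplus gl(1)$ be the subalgebra spanned by $E_{pq}$ ($p,q\le m+n$) and $E_{NN}$, with induced grading $L=L_-\oplus L_0\oplus L_+$, $L_0=gl(m)\oplus gl(n)\oplus gl(1)$, $L_\pm=\hat L_\pm\cap L$; put $K_+=\mathrm{span}\{E_{iN}\}_{i=1}^m$,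 $K_-=\mathrm{span}\{E_{Ni}\}_{i=1}^m$, so $\hat L_\pm=L_\pm\oplus K_\pm$. $V(\tilde\Lambda)$ admits a $\mathbb{Z}$-gradation $V(\tilde\Lambda)=\bigoplus_{k=-d}^0V_k(\tilde\Lambda)$ whose top component $V_0(\tilde\Lambda)$ (the maximal $\mathbb{Z}$-graded component) is the irreducible $\hat L_0$-module generated by the highest weight vector. $V(\tilde\Lambda)$ carries a (unique) non-degenerate sesquilinear form $\langle\,,\,\rangle$ with $\langle v,w\rangle=\overline{\langle w,v\rangle}$ and $\langle av,w\rangle=\langle v,a^\dagger w\rangle$ for all $a\in\hat L$, where $\dagger$ is the conjugation with $(E_{pq})^\dagger=E_{qp}$. An $L$-maximal weight vector is a weight vector (for the Cartan subalgebra spanned by the $E_{pp}$) annihilated by all $E_{pq}$ with $p<q\le m+n$. *)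

theory Defs
  imports "HOL-Analysis.Analysis"
begin

text \<open>Modules are modelled on \<open>complex^'d\<close> (any finite-dimensional complex space);
  the action of the basis element E_pq of gl(m|n+1) is the matrix \<open>\<rho> p q\<close>.\<close>

definition par :: "nat \<Rightarrow> nat \<Rightarrow> nat" where
  "par m p = (if p \<le> m then 0 else 1)"

definition idx :: "nat \<Rightarrow> nat \<Rightarrow> nat set" where
  "idx m n = {1..m+n+1}"

definition csubspace :: "(complex^'d) set \<Rightarrow> bool" where
  "csubspace S \<longleftrightarrow> 0 \<in> S \<and> (\<forall>x\<in>S. \<forall>y\<in>S. x + y \<in> S) \<and> (\<forall>c. \<forall>x\<in>S. c *s x \<in> S)"

definition is_rep :: "nat \<Rightarrow> nat \<Rightarrow> (nat \<Rightarrow> nat \<Rightarrow> complex^'d^'d) \<Rightarrow> bool" where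
  "is_rep m n \<rho> \<longleftrightarrow>
    (\<forall>p\<in>idx m n. \<forall>q\<in>idx m n. \<forall>r\<in>idx m n. \<forall>s\<in>idx m n. \<forall>x.
      let e = (-1::complex) ^ ((par m p + par m q) * (par m r + par m s)) in
      \<rho> p q *v (\<rho> r s *v x) - e *s (\<rho> r s *v (\<rho> p q *v x))
        = (if q = r then \<rho> p s *v x else 0) - e *s (if p = s then \<rho> r q *v x else 0))"

definition irreducible_rep :: "nat \<Rightarrow> nat \<Rightarrow> (nat \<Rightarrow> nat \<Rightarrow> complex^'d^'d) \<Rightarrow> bool" where
  "irreducible_rep m n \<rho> \<longleftrightarrow>
    (\<forall>S. csubspace S \<and> (\<forall>p\<in>idx m n. \<forall>q\<in>idx m n. \<forall>x\<in>S. \<rho> p q *v x \<in> S)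
        \<longrightarrow> S = {0} \<or> S = UNIV)"

definition highest_weight_vector ::
  "nat \<Rightarrow> nat \<Rightarrow> (nat \<Rightarrow> nat \<Rightarrow> complex^'d^'d) \<Rightarrow> (nat \<Rightarrow> complex) \<Rightarrow> complex^'d \<Rightarrow> bool" where
  "highest_weight_vector m n \<rho> \<Lambda> v0 \<longleftrightarrow> v0 \<noteq> 0 \<and>
     (\<forall>p\<in>idx m n. \<rho> p p *v v0 = \<Lambda> p *s v0) \<and>
     (\<forall>p\<in>idx m n. \<forall>q\<in>idx m n. p < q \<longrightarrow> \<rho> p q *v v0 = 0)"

text \<open>\<open>gen_span \<rho> G X\<close> = U(g_G) X, where g_G is spanned by the E_pq with (p,q) in G.\<close>
inductive_set gen_span :: "(nat \<Rightarrow> nat \<Rightarrow> complex^'d^'d) \<Rightarrow> (nat \<times> nat) set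
    \<Rightarrow> (complex^'d) set \<Rightarrow> (complex^'d) set"
  for \<rho> G X where
  base: "x \<in> X \<Longrightarrow> x \<in> gen_span \<rho> G X"
| zero: "0 \<in> gen_span \<rho> G X"
| add: "x \<in> gen_span \<rho> G X \<Longrightarrow> y \<in> gen_span \<rho> G X \<Longrightarrow> x + y \<in> gen_span \<rho> G X"
| smult: "x \<in> gen_span \<rho> G X \<Longrightarrow> c *s x \<in> gen_span \<rho> G X"
| act: "(p, q) \<in> G \<Longrightarrow> x \<in> gen_span \<rho> G X \<Longrightarrow> \<rho> p q *v x \<in> gen_span \<rho> G X"

text \<open>Even part \<open>L0hat = gl(m) + gl(n+1)\<close> and \<open>K_- = span{E_Ni}\<close>.\<close>
definition L0hat :: "nat \<Rightarrow> nat \<Rightarrow> (nat \<times> nat) set" where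
  "L0hat m n = {(p, q). p \<in> idx m n \<and> q \<in> idx m n \<and> par m p = par m q}"

definition Kminus :: "nat \<Rightarrow> nat \<Rightarrow> (nat \<times> nat) set" where
  "Kminus m n = {(m+n+1, i) | i. 1 \<le> i \<and> i \<le> m}"

text \<open>Top component \<open>V_0 = U(L0hat) v0\<close> and \<open>W = U(K_-) V_0\<close>.\<close>
definition V0 :: "nat \<Rightarrow> nat \<Rightarrow> (nat \<Rightarrow> nat \<Rightarrow> complex^'d^'d) \<Rightarrow> complex^'d \<Rightarrow> (complex^'d) set" where
  "V0 m n \<rho> v0 = gen_span \<rho> (L0hat m n) {v0}"

definition Wspace :: "nat \<Rightarrow> nat \<Rightarrow> (nat \<Rightarrow> nat \<Rightarrow> complex^'d^'d) \<Rightarrow> complex^'d \<Rightarrow> (complex^'d) set" where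
  "Wspace m n \<rho> v0 = gen_span \<rho> (Kminus m n) (V0 m n \<rho> v0)"

definition invariant_form :: "nat \<Rightarrow> nat \<Rightarrow> (nat \<Rightarrow> nat \<Rightarrow> complex^'d^'d)
    \<Rightarrow> (complex^'d \<Rightarrow> complex^'d \<Rightarrow> complex) \<Rightarrow> bool" where
  "invariant_form m n \<rho> B \<longleftrightarrow>
    (\<forall>x y z. B (x + y) z = B x z + B y z) \<and>
    (\<forall>c x z. B (c *s x) z = c * B x z) \<and>
    (\<forall>x y. B x y = cnj (B y x)) \<and>
    (\<forall>x. (\<forall>y. B x y = 0) \<longrightarrow> x = 0) \<and>
    (\<forall>p\<in>idx m n. \<forall>q\<in>idx m n. \<forall>x y. B (\<rho> p q *v x) y = B x (\<rho> q p *v y))"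

text \<open>L-maximal weight vector (L = gl(m|n) + gl(1)).\<close>
definition L_maximal_weight_vector ::
  "nat \<Rightarrow> nat \<Rightarrow> (nat \<Rightarrow> nat \<Rightarrow> complex^'d^'d) \<Rightarrow> complex^'d \<Rightarrow> bool" where
  "L_maximal_weight_vector m n \<rho> v \<longleftrightarrow>
     (\<exists>\<mu>. \<forall>p\<in>idx m n. \<rho> p p *v v = \<mu> p *s v) \<and>
     (\<forall>p q. 1 \<le> p \<and> p < q \<and> q \<le> m + n \<longrightarrow> \<rho> p q *v v = 0)"

end

theory Submission
  imports Defs
begin

lemma mv_add: "(A::complex^'d^'d) *v (x + y) = A *v x + A *v y"
  by (simp add: matrix_vector_mult_def vec_eq_iff sum.distrib algebra_simps)

lemma mv_smult: "(A::complex^'d^'d) *v (c *s x) = c *s (A *v x)"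
  by (simp add: matrix_vector_mult_def vec_eq_iff sum_distrib_left algebra_simps)

lemma gs_diff: "x \<in> gen_span \<rho> G X \<Longrightarrow> y \<in> gen_span \<rho> G X \<Longrightarrow> x - y \<in> gen_span \<rho> G X"
proof -
  assume a: "x \<in> gen_span \<rho> G X" "y \<in> gen_span \<rho> G X"
  have "(-1) *s y \<in> gen_span \<rho> G X" using a(2) by (rule gen_span.smult)
  hence "x + (-1) *s y \<in> gen_span \<rho> G X" using a by (intro gen_span.add)
  moreover have "x + (-1) *s y = x - y" by (simp add: vec_eq_iff)
  ultimately show ?thesis by simp
qed

lemma gs_mono: "X \<subseteq> gen_span \<rho> G Y \<Longrightarrow> x \<in> gen_span \<rho> G X \<Longrightarrow> x \<in> gen_span \<rho> G Y"
proof -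
  assume s: "X \<subseteq> gen_span \<rho> G Y" and x: "x \<in> gen_span \<rho> G X"
  from x show ?thesis using s
    by (induction rule: gen_span.induct) (auto intro: gen_span.intros)
qed

lemma rep_eq:
  assumes "is_rep m n \<rho>" "p \<in> idx m n" "q \<in> idx m n" "r \<in> idx m n" "s \<in> idx m n"
  shows "\<rho> p q *v (\<rho> r s *v x) =
     ((-1::complex) ^ ((par m p + par m q) * (par m r + par m s))) *s (\<rho> r s *v (\<rho> p q *v x))
     + (if q = r then \<rho> p s *v x else 0)
     - ((-1::complex) ^ ((par m p + par m q) * (par m r + par m s))) *s (if p = s then \<rho> r q *v x else 0)"
proof -
  have "\<rho> p q *v (\<rho> r s *v x) - ((-1::complex) ^ ((par m p + par m q) * (par m r + par m s))) *s (\<rho> r s *v (\<rho> p q *v x))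
     = (if q = r then \<rho> p s *v x else 0)
     - ((-1::complex) ^ ((par m p + par m q) * (par m r + par m s))) *s (if p = s then \<rho> r q *v x else 0)"
    using assms unfolding is_rep_def Let_def by blast
  then show ?thesis by (simp add: algebra_simps)
qed

definition Lmh :: "nat \<Rightarrow> nat \<Rightarrow> (nat \<times> nat) set" where
  "Lmh m n = {(q, p). 1 \<le> p \<and> p \<le> m \<and> m < q \<and> q \<le> m+n+1}"
definition Lph :: "nat \<Rightarrow> nat \<Rightarrow> (nat \<times> nat) set" where
  "Lph m n = {(p, q). 1 \<le> p \<and> p \<le> m \<and> m < q \<and> q \<le> m+n+1}"
definition Lm :: "nat \<Rightarrow> nat \<Rightarrow> (nat \<times> nat) set" where
  "Lm m n = {(q, p). 1 \<le> p \<and> p \<le> m \<and> m < q \<and> q \<le> m+n}"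

lemma V0_killed:
  assumes rep: "is_rep m n \<rho>" and hw: "highest_weight_vector m n \<rho> \<Lambda> v0"
    and x: "x \<in> gen_span \<rho> (L0hat m n) {v0}"
  shows "\<forall>p q. (p,q)\<in>Lph m n \<longrightarrow> \<rho> p q *v x = 0"
  using x
proof (induction rule: gen_span.induct)
  case (base x)
  then show ?case using hw unfolding highest_weight_vector_def Lph_def idx_def by auto
next
  case zero
  then show ?case by simp
next
  case (add x y)
  then show ?case by (auto simp: mv_add)
next
  case (smult x c)
  then show ?case by (auto simp: mv_smult)
next
  case (act r s y)
  show ?case
  proof (intro allI impI)
    fix p q assume pq: "(p, q) \<in> Lph m n"
    have rs: "r \<in> idx m n" "s \<in> idx m n" "par m r = par m s" using act.hyps unfolding L0hat_def by auto
    have pqi: "p \<in> idx m n" "q \<in> idx m n" using pq unfolding Lph_def idx_def by auto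
    have h1: "\<rho> p q *v y = 0" using act.IH pq by auto
    have h2: "q = r \<Longrightarrow> \<rho> p s *v y = 0"
    proof -
      assume "q = r"
      then have "(p, s) \<in> Lph m n" using pq rs unfolding Lph_def idx_def par_def by (auto split: if_splits)
      then show ?thesis using act.IH by auto
    qed
    have h3: "p = s \<Longrightarrow> \<rho> r q *v y = 0"
    proof -
      assume "p = s"
      then have "(r, q) \<in> Lph m n" using pq rs unfolding Lph_def idx_def par_def by (auto split: if_splits)
      then show ?thesis using act.IH by auto
    qed
    show "\<rho> p q *v (\<rho> r s *v y) = 0"
      using rep_eq[OF rep pqi rs(1,2), of y] h1 h2 h3 by simp
  qed
qed


lemma comb: "A \<in> gen_span \<rho> G X \<Longrightarrow> B \<in> gen_span \<rho> G X \<Longrightarrow> C \<in> gen_span \<rho> G X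
   \<Longrightarrow> e *s A + B - e *s C \<in> gen_span \<rho> G X"
  by (intro gs_diff gen_span.add gen_span.smult)

lemma if_mem: "(c \<Longrightarrow> A \<in> gen_span \<rho> G X) \<Longrightarrow> (if c then A else 0) \<in> gen_span \<rho> G X"
  by (auto intro: gen_span.zero)

lemma T_inv:
  assumes rep: "is_rep m n \<rho>" and hw: "highest_weight_vector m n \<rho> \<Lambda> v0"
    and x: "x \<in> gen_span \<rho> (Lmh m n) (V0 m n \<rho> v0)"
  shows "(\<forall>p q. (p,q)\<in>L0hat m n \<longrightarrow> \<rho> p q *v x \<in> gen_span \<rho> (Lmh m n) (V0 m n \<rho> v0)) \<and>
         (\<forall>p q. (p,q)\<in>Lph m n \<longrightarrow> \<rho> p q *v x \<in> gen_span \<rho> (Lmh m n) (V0 m n \<rho> v0))"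
  using x
proof (induction rule: gen_span.induct)
  case (base x)
  have "\<forall>p q. (p,q)\<in>L0hat m n \<longrightarrow> \<rho> p q *v x \<in> V0 m n \<rho> v0"
    using base unfolding V0_def by (auto intro: gen_span.act)
  moreover have "\<forall>p q. (p,q)\<in>Lph m n \<longrightarrow> \<rho> p q *v x = 0"
    using V0_killed[OF rep hw] base unfolding V0_def by blast
  ultimately show ?case by (auto intro: gen_span.base gen_span.zero)
next
  case zero
  then show ?case by (auto intro: gen_span.zero)
next
  case (add x y)
  then show ?case by (auto simp: mv_add intro: gen_span.add)
next
  case (smult x c)
  then show ?case by (auto simp: mv_smult intro: gen_span.smult)
next
  case (act a b y)
  have ab: "a \<in> idx m n" "b \<in> idx m n" "par m a = 1" "par m b = 0" "m < a" "b \<le> m" "1 \<le> b" "a \<le> m+n+1"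
    using act.hyps unfolding Lmh_def idx_def par_def by auto
  have IH0: "\<And>p q. (p,q)\<in>L0hat m n \<Longrightarrow> \<rho> p q *v y \<in> gen_span \<rho> (Lmh m n) (V0 m n \<rho> v0)"
    using act.IH by blast
  have IHp: "\<And>p q. (p,q)\<in>Lph m n \<Longrightarrow> \<rho> p q *v y \<in> gen_span \<rho> (Lmh m n) (V0 m n \<rho> v0)"
    using act.IH by blast
  show ?case
  proof (intro conjI allI impI)
    fix p q assume pq: "(p, q) \<in> L0hat m n"
    have pqi: "p \<in> idx m n" "q \<in> idx m n" "par m p = par m q" using pq unfolding L0hat_def by auto
    have e: "((-1::complex) ^ ((par m p + par m q) * (par m a + par m b))) = 1"
      using pqi(3) ab(3,4) by (cases "p \<le> m") (auto simp: par_def)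
    have t1: "\<rho> a b *v (\<rho> p q *v y) \<in> gen_span \<rho> (Lmh m n) (V0 m n \<rho> v0)"
      using IH0 IHp pq act.hyps by (blast intro: gen_span.act)
    have t2: "(if q = a then \<rho> p b *v y else 0) \<in> gen_span \<rho> (Lmh m n) (V0 m n \<rho> v0)"
    proof (rule if_mem)
      assume "q = a"
      then have "par m p = 1" using pqi(3) ab(3) by simp
      then have "m < p" by (simp add: par_def split: if_splits)
      moreover have "p \<le> m+n+1" using pqi(1) by (simp add: idx_def)
      ultimately have "(p, b) \<in> Lmh m n" using ab unfolding Lmh_def by simp
      then show "\<rho> p b *v y \<in> gen_span \<rho> (Lmh m n) (V0 m n \<rho> v0)" using act.hyps by (blast intro: gen_span.act)
    qed
    have t3: "(if p = b then \<rho> a q *v y else 0) \<in> gen_span \<rho> (Lmh m n) (V0 m n \<rho> v0)"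
    proof (rule if_mem)
      assume "p = b"
      then have "par m q = 0" using pqi(3) ab(4) by simp
      then have "q \<le> m" by (simp add: par_def split: if_splits)
      moreover have "1 \<le> q" using pqi(2) by (simp add: idx_def)
      ultimately have "(a, q) \<in> Lmh m n" using ab unfolding Lmh_def by simp
      then show "\<rho> a q *v y \<in> gen_span \<rho> (Lmh m n) (V0 m n \<rho> v0)" using act.hyps by (blast intro: gen_span.act)
    qed
    show "\<rho> p q *v (\<rho> a b *v y) \<in> gen_span \<rho> (Lmh m n) (V0 m n \<rho> v0)"
      unfolding rep_eq[OF rep pqi(1,2) ab(1,2)] e by (rule comb[OF t1 t2 t3])
  next
    fix p q assume pq: "(p, q) \<in> Lph m n"
    have pqi: "p \<in> idx m n" "q \<in> idx m n" "par m p = 0" "par m q = 1" "p \<le> m" "m < q" "1 \<le> p" "q \<le> m+n+1"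
      using pq unfolding Lph_def idx_def par_def by auto
    have e: "((-1::complex) ^ ((par m p + par m q) * (par m a + par m b))) = -1"
      using pqi(3,4) ab(3,4) by simp
    have t1: "\<rho> a b *v (\<rho> p q *v y) \<in> gen_span \<rho> (Lmh m n) (V0 m n \<rho> v0)"
      using IH0 IHp pq act.hyps by (blast intro: gen_span.act)
    have t2: "(if q = a then \<rho> p b *v y else 0) \<in> gen_span \<rho> (Lmh m n) (V0 m n \<rho> v0)"
    proof (rule if_mem)
      assume "q = a"
      then have "(p, b) \<in> L0hat m n" using pqi ab unfolding L0hat_def idx_def par_def by auto
      then show "\<rho> p b *v y \<in> gen_span \<rho> (Lmh m n) (V0 m n \<rho> v0)" using IH0 by blast
    qed
    have t3: "(if p = b then \<rho> a q *v y else 0) \<in> gen_span \<rho> (Lmh m n) (V0 m n \<rho> v0)"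
    proof (rule if_mem)
      assume "p = b"
      then have "(a, q) \<in> L0hat m n" using pqi ab unfolding L0hat_def idx_def par_def by auto
      then show "\<rho> a q *v y \<in> gen_span \<rho> (Lmh m n) (V0 m n \<rho> v0)" using IH0 by blast
    qed
    show "\<rho> p q *v (\<rho> a b *v y) \<in> gen_span \<rho> (Lmh m n) (V0 m n \<rho> v0)"
      unfolding rep_eq[OF rep pqi(1,2) ab(1,2)] e by (rule comb[OF t1 t2 t3])
  qed
qed


lemma T_univ:
  assumes rep: "is_rep m n \<rho>" and irr: "irreducible_rep m n \<rho>"
    and hw: "highest_weight_vector m n \<rho> \<Lambda> v0"
  shows "gen_span \<rho> (Lmh m n) (V0 m n \<rho> v0) = UNIV"
proof -
  let ?T = "gen_span \<rho> (Lmh m n) (V0 m n \<rho> v0)"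
  have cs: "csubspace ?T" unfolding csubspace_def by (auto intro: gen_span.intros)
  have inv: "\<forall>p\<in>idx m n. \<forall>q\<in>idx m n. \<forall>x\<in>?T. \<rho> p q *v x \<in> ?T"
  proof (intro ballI)
    fix p q x assume p: "p \<in> idx m n" and q: "q \<in> idx m n" and x: "x \<in> ?T"
    have "(p,q) \<in> L0hat m n \<or> (p,q) \<in> Lph m n \<or> (p,q) \<in> Lmh m n"
      using p q unfolding L0hat_def Lph_def Lmh_def idx_def par_def by auto
    then show "\<rho> p q *v x \<in> ?T"
      using T_inv[OF rep hw x] x by (blast intro: gen_span.act)
  qed
  have "v0 \<in> ?T" unfolding V0_def by (intro gen_span.base) simp
  moreover have "v0 \<noteq> 0" using hw unfolding highest_weight_vector_def by simp
  ultimately have "?T \<noteq> {0}" by blast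
  then show ?thesis using irr cs inv unfolding irreducible_rep_def by blast
qed

lemma Tp_K:
  assumes rep: "is_rep m n \<rho>"
    and x: "x \<in> gen_span \<rho> (Lm m n) (Wspace m n \<rho> v0)"
  shows "\<forall>i. 1 \<le> i \<and> i \<le> m \<longrightarrow> \<rho> (m+n+1) i *v x \<in> gen_span \<rho> (Lm m n) (Wspace m n \<rho> v0)"
  using x
proof (induction rule: gen_span.induct)
  case (base x)
  show ?case
  proof (intro allI impI)
    fix i assume i: "1 \<le> i \<and> i \<le> m"
    have "(m+n+1, i) \<in> Kminus m n" using i unfolding Kminus_def by auto
    then have "\<rho> (m+n+1) i *v x \<in> Wspace m n \<rho> v0"
      using base unfolding Wspace_def by (rule gen_span.act)
    then show "\<rho> (m+n+1) i *v x \<in> gen_span \<rho> (Lm m n) (Wspace m n \<rho> v0)" by (rule gen_span.base)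
  qed
next
  case zero
  then show ?case by (auto intro: gen_span.zero)
next
  case (add x y)
  then show ?case by (auto simp: mv_add intro: gen_span.add)
next
  case (smult x c)
  then show ?case by (auto simp: mv_smult intro: gen_span.smult)
next
  case (act a b y)
  have ab: "a \<in> idx m n" "b \<in> idx m n" "par m a = 1" "par m b = 0" "m < a" "b \<le> m" "a \<le> m+n"
    using act.hyps unfolding Lm_def idx_def par_def by auto
  show ?case
  proof (intro allI impI)
    fix i assume i: "1 \<le> i \<and> i \<le> m"
    have Ni: "m+n+1 \<in> idx m n" "i \<in> idx m n" "par m (m+n+1) = 1" "par m i = 0"
      using i unfolding idx_def par_def by auto
    have e: "((-1::complex) ^ ((par m (m+n+1) + par m i) * (par m a + par m b))) = -1"
      using Ni ab by simp
    have t1: "\<rho> a b *v (\<rho> (m+n+1) i *v y) \<in> gen_span \<rho> (Lm m n) (Wspace m n \<rho> v0)"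
      using act.IH i act.hyps by (blast intro: gen_span.act)
    have t2: "(if i = a then \<rho> (m+n+1) b *v y else 0) \<in> gen_span \<rho> (Lm m n) (Wspace m n \<rho> v0)"
      using i ab by (auto intro: gen_span.zero)
    have t3: "(if m+n+1 = b then \<rho> a i *v y else 0) \<in> gen_span \<rho> (Lm m n) (Wspace m n \<rho> v0)"
      using i ab by (auto intro: gen_span.zero)
    show "\<rho> (m+n+1) i *v (\<rho> a b *v y) \<in> gen_span \<rho> (Lm m n) (Wspace m n \<rho> v0)"
      unfolding rep_eq[OF rep Ni(1,2) ab(1,2)] e by (rule comb[OF t1 t2 t3])
  qed
qed

lemma T_sub:
  assumes rep: "is_rep m n \<rho>"
    and x: "x \<in> gen_span \<rho> (Lmh m n) (V0 m n \<rho> v0)"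
  shows "x \<in> gen_span \<rho> (Lm m n) (Wspace m n \<rho> v0)"
  using x
proof (induction rule: gen_span.induct)
  case (base x)
  then show ?case unfolding Wspace_def by (intro gen_span.base)
next
  case zero
  then show ?case by (rule gen_span.zero)
next
  case (add x y)
  then show ?case by (blast intro: gen_span.add)
next
  case (smult x c)
  then show ?case by (blast intro: gen_span.smult)
next
  case (act a b y)
  show ?case
  proof (cases "a \<le> m+n")
    case True
    then have "(a,b) \<in> Lm m n" using act.hyps unfolding Lm_def Lmh_def by auto
    then show ?thesis using act.IH by (rule gen_span.act)
  next
    case False
    then have "a = m+n+1" "1 \<le> b \<and> b \<le> m" using act.hyps unfolding Lmh_def by auto
    then show ?thesis using Tp_K[OF rep act.IH] by auto
  qed
qed

lemma F_zero:
  assumes inv: "invariant_form m n \<rho> B"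
    and lm: "L_maximal_weight_vector m n \<rho> v"
    and W0: "\<forall>w\<in>Wspace m n \<rho> v0. B v w = 0"
    and x: "x \<in> gen_span \<rho> (Lm m n) (Wspace m n \<rho> v0)"
  shows "B v x = 0"
proof -
  have addB: "\<And>x y z. B (x + y) z = B x z + B y z" using inv unfolding invariant_form_def by blast
  have smB: "\<And>c x z. B (c *s x) z = c * B x z" using inv unfolding invariant_form_def by blast
  have herm: "\<And>x y. B x y = cnj (B y x)" using inv unfolding invariant_form_def by blast
  have invB: "\<And>p q x y. p \<in> idx m n \<Longrightarrow> q \<in> idx m n \<Longrightarrow> B (\<rho> p q *v x) y = B x (\<rho> q p *v y)"
    using inv unfolding invariant_form_def by blast
  have z: "\<And>y. B 0 y = 0"
  proof -
    fix y
    have "B ((0::complex) *s y) y = 0 * B y y" by (rule smB)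
    moreover have "(0::complex) *s y = 0" by (simp add: vec_eq_iff)
    ultimately show "B 0 y = 0" by simp
  qed
  from x show ?thesis
  proof (induction rule: gen_span.induct)
    case (base x)
    then show ?case using W0 by blast
  next
    case zero
    have "B v 0 = cnj (B 0 v)" by (rule herm)
    then show ?case by (simp only: z complex_cnj_zero)
  next
    case (add x y)
    have "B v (x + y) = cnj (B (x+y) v)" by (rule herm)
    also have "\<dots> = cnj (B x v) + cnj (B y v)" by (simp only: addB complex_cnj_add)
    also have "cnj (B x v) = B v x" using herm[of v x] by simp
    also have "cnj (B y v) = B v y" using herm[of v y] by simp
    finally show ?case using add.IH by simp
  next
    case (smult x c)
    have "B v (c *s x) = cnj (B (c *s x) v)" by (rule herm)
    also have "\<dots> = cnj c * cnj (B x v)" by (simp only: smB complex_cnj_mult)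
    also have "cnj (B x v) = B v x" using herm[of v x] by simp
    finally show ?case using smult.IH by simp
  next
    case (act a b y)
    have ab: "a \<in> idx m n" "b \<in> idx m n" "1 \<le> b" "b < a" "a \<le> m+n"
      using act.hyps unfolding Lm_def idx_def by auto
    have r0: "\<rho> b a *v v = 0" using lm ab unfolding L_maximal_weight_vector_def by blast
    have "B (\<rho> b a *v v) y = B v (\<rho> a b *v y)" by (rule invB[OF ab(2,1)])
    then show ?case using r0 z by simp
  qed
qed

theorem lemma1:
  fixes m n :: nat
    and \<rho> :: "nat \<Rightarrow> nat \<Rightarrow> complex^'d^'d"
    and \<Lambda> :: "nat \<Rightarrow> complex"
    and v0 vplus :: "complex^'d"
    and B :: "complex^'d \<Rightarrow> complex^'d \<Rightarrow> complex"
  assumes "is_rep m n \<rho>"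
    and "irreducible_rep m n \<rho>"
    and "highest_weight_vector m n \<rho> \<Lambda> v0"
    and "invariant_form m n \<rho> B"
    and "vplus \<noteq> 0"
    and "L_maximal_weight_vector m n \<rho> vplus"
  shows "\<exists>w \<in> Wspace m n \<rho> v0. B vplus w \<noteq> 0"
proof (rule ccontr)
  assume "\<not> ?thesis"
  then have W0: "\<forall>w\<in>Wspace m n \<rho> v0. B vplus w = 0" by blast
  have "\<forall>y. B vplus y = 0"
  proof
    fix y
    have "y \<in> gen_span \<rho> (Lmh m n) (V0 m n \<rho> v0)" using T_univ[OF assms(1-3)] by simp
    then have "y \<in> gen_span \<rho> (Lm m n) (Wspace m n \<rho> v0)" by (rule T_sub[OF assms(1)])
    then show "B vplus y = 0" by (rule F_zero[OF assms(4,6) W0])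
  qed
  then have "vplus = 0" using assms(4) unfolding invariant_form_def by blast
  then show False using assms(5) by simp
qed

end
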